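(* Let $K$ be a Barański sponge in $\mathbb R^d$ and let $\mathbf w,\mathbf w'\in\mathcal D^*$ with $|\mathbf w|=|\mathbf w'|$ be such that $\pi(\mathbf w)-\pi(\mathbf w')$ is a nonzero $0$-$\pm1$ vector. Then $\psi_{\mathbf w}(K)\cap\psi_{\mathbf w'}(K)\ne\varnothing$ if and only if $\pi(\mathbf w)-\pi(\mathbf w')\in\mathcal E_{\,d-|\pi(\mathbf w)-\pi(\mathbf w')|}$.
   Context: Let $d\ge2$, integers $N_1,\dots,N_d\ge2$, probability vectors $(p_{i,1},\dots,p_{i,N_i})$ (positive entries summing to 1), $q_{i,1}=0$, $q_{i,j}=\sum_{\ell<j}p_{i,\ell}$. Let $\mathcal D\subset\{(j_1,\dots,j_d):1\le j_i\le N_i\}$ with $1<|\mathcal D|<\prod_iN_i$; for $w=(j_1,\dots,j_d)\in\mathcal D$, $\psi_w(x_1,\dots,x_d)=(p_{1,j_1}x_1+q_{1,j_1},\dots,p_{d,j_d}x_d+q_{d,j_d})$; $K$ is the unique nonempty compact set with $K=\bigcup_{w\in\mathcal D}\psi_w(K)$. $\mathcal D^*$ is the set of nonempty finite words over $\mathcal D$, $|\mathbf w|$ the length, and $\psi_{w_1\cdots w_k}=\psi_{w_1}\circ\cdots\circ\psi_{w_k}$. Define $\pi_i:\mathcal D^*\to\mathbb Z_{\ge0}$ by $\pi_i((j_1,\dots,j_d))=j_i$ and $\pi_i(\mathbf w w)=N_i\pi_i(\mathbf w)+\pi_i(w)$ for $\mathbf w\in\mathcal D^*,w\in\mathcal D$;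 $\pi(\mathbf w)=(\pi_1(\mathbf w),\dots,\pi_d(\mathbf w))$. A $0$-$\pm1$ vector is $\alpha\in\mathbb Z^d$ with all $|\alpha_i|\le1$, and $|\alpha|=\sum_i|\alpha_i|$. $\mathcal E_0$ is the set of nonzero $0$-$\pm1$ vectors $\alpha$ with $((N_1-1)\alpha_1,\dots,(N_d-1)\alpha_d)\in\mathcal D-\mathcal D$; for $1\le t\le d-1$, $\mathcal E_t$ is the set of nonzero $0$-$\pm1$ vectors $\alpha$ for which there is $e\in\mathcal D-\mathcal D$ with $(N_1\alpha_1,\dots,N_d\alpha_d)+e\in\bigcup_{k=0}^{t-1}\mathcal E_k$. Here $\mathcal D-\mathcal D=\{u-v:u,v\in\mathcal D\}$. *)

theory Defs
  imports "HOL-Analysis.Analysis"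
begin

text \<open>Coordinates are indexed by a finite type 'n with d = CARD('n).
  A digit is a function 'n => nat (the tuple (j_1,...,j_d)), 1-based.\<close>

definition q_sp :: "('n \<Rightarrow> nat \<Rightarrow> real) \<Rightarrow> 'n \<Rightarrow> nat \<Rightarrow> real" where
  "q_sp p i j = (\<Sum>l\<in>{1..<j}. p i l)"

definition psi_digit :: "('n \<Rightarrow> nat \<Rightarrow> real) \<Rightarrow> ('n \<Rightarrow> nat) \<Rightarrow> real^'n \<Rightarrow> real^'n" where
  "psi_digit p w x = (\<chi> i. p i (w i) * x $ i + q_sp p i (w i))"

definition psi_word :: "('n \<Rightarrow> nat \<Rightarrow> real) \<Rightarrow> ('n \<Rightarrow> nat) list \<Rightarrow> real^'n \<Rightarrow> real^'n" where
  "psi_word p ws = foldr (\<lambda>w f. psi_digit p w \<circ> f) ws id"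

definition pi_word :: "('n \<Rightarrow> nat) \<Rightarrow> ('n \<Rightarrow> nat) list \<Rightarrow> 'n \<Rightarrow> int" where
  "pi_word N ws i = foldl (\<lambda>acc w. int (N i) * acc + int (w i)) 0 ws"

definition zpm_vec :: "('n \<Rightarrow> int) \<Rightarrow> bool" where
  "zpm_vec \<alpha> \<longleftrightarrow> (\<forall>i. \<bar>\<alpha> i\<bar> \<le> 1)"

definition zpm_norm :: "('n::finite \<Rightarrow> int) \<Rightarrow> nat" where
  "zpm_norm \<alpha> = (\<Sum>i\<in>UNIV. nat \<bar>\<alpha> i\<bar>)"

definition diff_set :: "('n \<Rightarrow> nat) set \<Rightarrow> ('n \<Rightarrow> int) set" where
  "diff_set D = {(\<lambda>i. int (u i) - int (v i)) | u v. u \<in> D \<and> v \<in> D}"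

fun E_set :: "('n \<Rightarrow> nat) \<Rightarrow> ('n \<Rightarrow> nat) set \<Rightarrow> nat \<Rightarrow> ('n \<Rightarrow> int) set" where
  "E_set N D 0 = {\<alpha>. zpm_vec \<alpha> \<and> (\<exists>i. \<alpha> i \<noteq> 0) \<and> (\<lambda>i. (int (N i) - 1) * \<alpha> i) \<in> diff_set D}"
| "E_set N D (Suc t) = {\<alpha>. zpm_vec \<alpha> \<and> (\<exists>i. \<alpha> i \<noteq> 0) \<and>
     (\<exists>e\<in>diff_set D. (\<lambda>i. int (N i) * \<alpha> i + e i) \<in> (\<Union>k\<le>t. E_set N D k))}"

end

theory Submission
  imports Defs
begin


lemma q_one: "q_sp p i 1 = 0" by (simp add: q_sp_def)

lemma q_one': "q_sp p i (Suc 0) = 0" by (simp add: q_sp_def)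

lemma q_suc: "1 \<le> j \<Longrightarrow> q_sp p i (Suc j) = q_sp p i j + p i j"
  unfolding q_sp_def by (simp add: atLeastLessThanSuc add.commute)

lemma q_mono_strict:
  assumes pos: "\<And>j. 1 \<le> j \<Longrightarrow> j \<le> n \<Longrightarrow> p i j > 0"
  shows "1 \<le> j \<Longrightarrow> j < k \<Longrightarrow> k \<le> Suc n \<Longrightarrow> q_sp p i j < q_sp p i k"
proof (induction k)
  case 0 then show ?case by simp
next
  case (Suc k)
  have "q_sp p i (Suc k) = q_sp p i k + p i k" using Suc by (intro q_suc) auto
  moreover have "p i k > 0" using Suc pos by auto
  moreover have "q_sp p i j \<le> q_sp p i k" using Suc by (cases "j < k") (auto simp: less_Suc_eq)
  ultimately show ?case by simp
qed

lemma q_nonneg: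
  assumes pos: "\<And>j. 1 \<le> j \<Longrightarrow> j \<le> n \<Longrightarrow> p i j > 0"
  shows "j \<le> Suc n \<Longrightarrow> q_sp p i j \<ge> 0"
  unfolding q_sp_def by (rule sum_nonneg) (auto intro!: less_imp_le[OF pos])

lemma q_top:
  assumes "(\<Sum>j=1..n. p i j) = 1"
  shows "q_sp p i (Suc n) = 1"
  using assms unfolding q_sp_def by (simp add: atLeastLessThanSuc_atLeastAtMost)

definition Pw :: "('n \<Rightarrow> nat \<Rightarrow> real) \<Rightarrow> ('n \<Rightarrow> nat) list \<Rightarrow> 'n \<Rightarrow> real" where
  "Pw p ws i = foldr (\<lambda>w acc. p i (w i) * acc) ws 1"
definition Qw :: "('n \<Rightarrow> nat \<Rightarrow> real) \<Rightarrow> ('n \<Rightarrow> nat) list \<Rightarrow> 'n \<Rightarrow> real" where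
  "Qw p ws i = foldr (\<lambda>w acc. p i (w i) * acc + q_sp p i (w i)) ws 0"

lemma psi_word_coord: "psi_word p ws x $ i = Pw p ws i * x $ i + Qw p ws i"
  unfolding psi_word_def Pw_def Qw_def
  by (induction ws) (auto simp: psi_digit_def algebra_simps)

lemma Qw_fold: "foldr (\<lambda>w acc. p i (w i) * acc + q_sp p i (w i)) ws c = Pw p ws i * c + Qw p ws i"
  unfolding Pw_def Qw_def by (induction ws) (auto simp: algebra_simps)

lemma Pw_snoc: "Pw p (a @ [d]) i = Pw p a i * p i (d i)"
  unfolding Pw_def by (induction a) auto

lemma Qw_snoc: "Qw p (a @ [d]) i = Qw p a i + Pw p a i * q_sp p i (d i)"
  using Qw_fold[of p i a "q_sp p i (d i)"] unfolding Qw_def by (simp add: algebra_simps)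

lemma pi_snoc: "pi_word N (a @ [d]) i = int (N i) * pi_word N a i + int (d i)"
  unfolding pi_word_def by simp

lemma Pw_pos:
  assumes "\<And>w. w \<in> set ws \<Longrightarrow> p i (w i) > 0"
  shows "Pw p ws i > 0"
  using assms unfolding Pw_def by (induction ws) auto

lemma cell:
  assumes Nge: "N i \<ge> 2"
    and pos: "\<And>j. 1 \<le> j \<Longrightarrow> j \<le> N i \<Longrightarrow> p i j > 0"
    and ps: "(\<Sum>j=1..N i. p i j) = 1"
  shows "length s = length s' \<Longrightarrow> (\<forall>w\<in>set s \<union> set s'. 1 \<le> w i \<and> w i \<le> N i) \<Longrightarrow>
    (pi_word N s i = pi_word N s' i \<longrightarrow> Pw p s i = Pw p s' i \<and> Qw p s i = Qw p s' i) \<and>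
    (pi_word N s i = pi_word N s' i + 1 \<longrightarrow> Qw p s i = Qw p s' i + Pw p s' i)"
proof (induction s s' rule: rev_induct2)
  case 1 then show ?case by (simp add: pi_word_def)
next
  case (2 x xs) then show ?case by simp
next
  case (3 y ys) then show ?case by simp
next
  case (4 x xs y ys)
  have IH: "(pi_word N xs i = pi_word N ys i \<longrightarrow> Pw p xs i = Pw p ys i \<and> Qw p xs i = Qw p ys i) \<and>
    (pi_word N xs i = pi_word N ys i + 1 \<longrightarrow> Qw p xs i = Qw p ys i + Pw p ys i)"
    using 4 by auto
  have x: "1 \<le> x i" "x i \<le> N i" and y: "1 \<le> y i" "y i \<le> N i" using 4(3) by auto
  define A where "A = pi_word N xs i - pi_word N ys i"
  have e: "pi_word N (xs@[x]) i - pi_word N (ys@[y]) i = int (N i) * A + (int (x i) - int (y i))"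
    unfolding A_def pi_snoc by (simp add: algebra_simps)
  show ?case
  proof (rule conjI; rule impI)
    assume h: "pi_word N (xs @ [x]) i = pi_word N (ys @ [y]) i"
    hence "int (N i) * A = int (y i) - int (x i)" using e by simp
    moreover have "A = 0"
    proof (rule ccontr)
      assume "A \<noteq> 0"
      hence "\<bar>A\<bar> \<ge> 1" by simp
      hence "int (N i) * 1 \<le> int (N i) * \<bar>A\<bar>" by (intro mult_left_mono) auto
      hence "\<bar>int (N i) * A\<bar> \<ge> int (N i)" by (simp add: abs_mult)
      with calculation x y show False by auto
    qed
    ultimately have "x i = y i" "pi_word N xs i = pi_word N ys i" using A_def by auto
    with IH show "Pw p (xs @ [x]) i = Pw p (ys @ [y]) i \<and> Qw p (xs @ [x]) i = Qw p (ys @ [y]) i"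
      by (simp add: Pw_snoc Qw_snoc)
  next
    assume h: "pi_word N (xs @ [x]) i = pi_word N (ys @ [y]) i + 1"
    hence hA: "int (N i) * A = int (y i) - int (x i) + 1" using e by simp
    have "A = 0 \<or> A = 1"
    proof (rule ccontr)
      assume "\<not> (A = 0 \<or> A = 1)"
      hence "A \<ge> 2 \<or> A \<le> -1" by auto
      hence "int (N i) * A \<ge> int (N i) * 2 \<or> int (N i) * A \<le> int (N i) * (-1)"
        by (metis mult_left_mono of_nat_0_le_iff)
      with hA x y show False by auto
    qed
    then show "Qw p (xs @ [x]) i = Qw p (ys @ [y]) i + Pw p (ys @ [y]) i"
    proof
      assume "A = 0"
      hence "x i = Suc (y i)" "pi_word N xs i = pi_word N ys i" using hA A_def by auto
      with IH show ?thesis using q_suc[of "y i" p i] y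
        by (simp add: Pw_snoc Qw_snoc algebra_simps)
    next
      assume A1: "A = 1"
      hence "x i = 1" "y i = N i" using hA x y by auto
      have "pi_word N xs i = pi_word N ys i + 1" using A1 A_def by simp
      have pq: "p i (N i) + q_sp p i (N i) = 1"
        using q_suc[of "N i" p i] q_top[of p i "N i", OF ps] Nge by simp
      have "Qw p (xs @ [x]) i = Qw p xs i + Pw p xs i * q_sp p i (x i)" by (rule Qw_snoc)
      also have "\<dots> = Qw p ys i + Pw p ys i" using IH A1 A_def \<open>x i = 1\<close> q_one[of p i] by simp
      also have "\<dots> = Qw p ys i + Pw p ys i * q_sp p i (y i) + Pw p ys i * p i (y i)"
        using pq \<open>y i = N i\<close> by (simp add: distrib_left[symmetric] add.commute)
      also have "\<dots> = Qw p (ys @ [y]) i + Pw p (ys @ [y]) i" by (simp add: Qw_snoc Pw_snoc)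
      finally show ?thesis .
    qed
  qed
qed

locale dig =
  fixes p :: "'n \<Rightarrow> nat \<Rightarrow> real" and i :: 'n and n :: nat
  assumes n2: "n \<ge> 2"
    and pos: "\<And>j. 1 \<le> j \<Longrightarrow> j \<le> n \<Longrightarrow> p i j > 0"
    and ps: "(\<Sum>j=1..n. p i j) = 1"
begin

abbreviation "q \<equiv> q_sp p i"

lemma qtop: "q (Suc n) = 1" using q_top[of p i n, OF ps] .

lemma qlt: "1 \<le> j \<Longrightarrow> j < k \<Longrightarrow> k \<le> Suc n \<Longrightarrow> q j < q k"
  using q_mono_strict[of n p i j k] pos by blast

lemma qle: "1 \<le> j \<Longrightarrow> j \<le> k \<Longrightarrow> k \<le> Suc n \<Longrightarrow> q j \<le> q k"
  using qlt[of j k] by (cases "j = k") auto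

lemma q0: "j \<le> Suc n \<Longrightarrow> q j \<ge> 0" using q_nonneg[of n p i j] pos by blast

lemma qs: "1 \<le> j \<Longrightarrow> q (Suc j) = q j + p i j" by (rule q_suc)

lemma pq1: "1 \<le> j \<Longrightarrow> j \<le> n \<Longrightarrow> q j + p i j \<le> 1"
  using qle[of "Suc j" "Suc n"] qs[of j] qtop by simp

lemma p1: "1 \<le> j \<Longrightarrow> j \<le> n \<Longrightarrow> p i j < 1"
proof -
  assume j: "1 \<le> j" "j \<le> n"
  show ?thesis
  proof (cases "j = 1")
    case True
    have "q 2 < q (Suc n)" using qlt[of 2 "Suc n"] n2 by simp
    moreover have "q 2 = p i 1" using qs[of 1] q_one[of p i] by (simp add: numeral_2_eq_2)
    ultimately show ?thesis using True qtop by simp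
  next
    case False
    hence "q 1 < q j" using qlt[of 1 j] j by simp
    then show ?thesis using pq1[OF j] q_one[of p i] by simp
  qed
qed

lemma coord_fwd:
  fixes a :: int
  assumes u: "1 \<le> u" "u \<le> n" and v: "1 \<le> v" "v \<le> n"
    and x1: "0 \<le> x1" "x1 \<le> 1" and y1: "0 \<le> y1" "y1 \<le> 1"
    and a: "\<bar>a\<bar> \<le> 1"
    and eq: "q u + p i u * x1 + of_int a = q v + p i v * y1"
  shows "\<bar>int n * a + int u - int v\<bar> \<le> 1 \<and> y1 = x1 + of_int (int n * a + int u - int v)
     \<and> (a \<noteq> 0 \<longrightarrow> int n * a + int u - int v = a)"
proof -
  have pu: "p i u > 0" "p i u < 1" using pos[OF u] p1[OF u] by auto
  have pv: "p i v > 0" "p i v < 1" using pos[OF v] p1[OF v] by auto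
  have qu: "q u \<ge> 0" "q u + p i u \<le> 1" using q0[of u] pq1[OF u] u by auto
  have qv: "q v \<ge> 0" "q v + p i v \<le> 1" using q0[of v] pq1[OF v] v by auto
  have Xl: "p i u * x1 \<ge> 0" "p i u * x1 \<le> p i u" using pu x1 by (auto simp: mult_le_cancel_left1)
  have Yl: "p i v * y1 \<ge> 0" "p i v * y1 \<le> p i v" using pv y1 by (auto simp: mult_le_cancel_left1)
  have q1: "q 1 = 0" by (rule q_one)
  have a3: "a = 1 \<or> a = -1 \<or> a = 0" using a by auto
  moreover {
    assume a1: "a = 1"
    have X0: "q u = 0" "p i u * x1 = 0" using eq a1 qu qv Xl Yl by linarith+
    have "u = 1" using X0(1) qlt[of 1 u] u q1 by (cases "u = 1") auto
    have "x1 = 0" using X0(2) pu by simp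
    have Y1: "q v + p i v * y1 = 1" using eq a1 X0 by simp
    have "v = n"
    proof (rule ccontr)
      assume "v \<noteq> n"
      hence "q (Suc v) < q (Suc n)" using qlt[of "Suc v" "Suc n"] v by simp
      thus False using Y1 qs[of v] v qtop Yl by simp
    qed
    have "q v + p i v = 1" using \<open>v = n\<close> qs[of n] qtop n2 by simp
    hence "p i v * y1 = p i v" using Y1 by linarith
    hence "y1 = 1" using pv by simp
    have ?thesis using a1 \<open>u = 1\<close> \<open>v = n\<close> \<open>x1 = 0\<close> \<open>y1 = 1\<close> by simp
  }
  moreover {
    assume a1: "a = -1"
    have Y0: "q v = 0" "p i v * y1 = 0" using eq a1 qu qv Xl Yl by linarith+
    have "v = 1" using Y0(1) qlt[of 1 v] v q1 by (cases "v = 1") auto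
    have "y1 = 0" using Y0(2) pv by simp
    have X1: "q u + p i u * x1 = 1" using eq a1 Y0 by simp
    have "u = n"
    proof (rule ccontr)
      assume "u \<noteq> n"
      hence "q (Suc u) < q (Suc n)" using qlt[of "Suc u" "Suc n"] u by simp
      thus False using X1 qs[of u] u qtop Xl by simp
    qed
    have "q u + p i u = 1" using \<open>u = n\<close> qs[of n] qtop n2 by simp
    hence "p i u * x1 = p i u" using X1 by linarith
    hence "x1 = 1" using pu by simp
    have ?thesis using a1 \<open>v = 1\<close> \<open>u = n\<close> \<open>x1 = 1\<close> \<open>y1 = 0\<close> by simp
  }
  moreover {
    assume a0: "a = 0"
    have E: "q u + p i u * x1 = q v + p i v * y1" using eq a0 by simp
    consider "u = v" | "u < v" | "v < u" by arith
    hence ?thesis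
    proof cases
      case 1 thus ?thesis using E pu a0 by simp
    next
      case 2
      have "q (Suc u) \<le> q v" using qle[of "Suc u" v] 2 v by simp
      hence "q u + p i u \<le> q v" using qs[of u] u by simp
      hence eqs: "p i u * x1 = p i u" "p i v * y1 = 0" "q (Suc u) = q v"
        using E Xl Yl qs[of u] u \<open>q (Suc u) \<le> q v\<close> by linarith+
      have "v = Suc u" using eqs(3) qlt[of "Suc u" v] 2 v by (cases "v = Suc u") auto
      moreover have "x1 = 1" "y1 = 0" using eqs pu pv by auto
      ultimately show ?thesis using a0 by simp
    next
      case 3
      have "q (Suc v) \<le> q u" using qle[of "Suc v" u] 3 u by simp
      hence "q v + p i v \<le> q u" using qs[of v] v by simp
      hence eqs: "p i v * y1 = p i v" "p i u * x1 = 0" "q (Suc v) = q u"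
        using E Xl Yl qs[of v] v \<open>q (Suc v) \<le> q u\<close> by linarith+
      have "u = Suc v" using eqs(3) qlt[of "Suc v" u] 3 u by (cases "u = Suc v") auto
      moreover have "y1 = 1" "x1 = 0" using eqs pu pv by auto
      ultimately show ?thesis using a0 by simp
    qed
  }
  ultimately show ?thesis by blast
qed

lemma coord_bwd:
  fixes a b :: int
  assumes u: "1 \<le> u" "u \<le> n" and v: "1 \<le> v" "v \<le> n"
    and x1: "0 \<le> x1" "x1 \<le> 1" and y1: "0 \<le> x1 + of_int b" "x1 + of_int b \<le> 1"
    and a: "\<bar>a\<bar> \<le> 1" and b: "\<bar>b\<bar> \<le> 1"
    and be: "b = int n * a + int u - int v"
  shows "q v + p i v * (x1 + of_int b) = q u + p i u * x1 + of_int a"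
proof -
  have q1: "q 1 = 0" by (rule q_one)
  have qn: "q n + p i n = 1" using qs[of n] qtop n2 by simp
  have a3: "a = 1 \<or> a = -1 \<or> a = 0" using a by auto
  have b3: "b = 1 \<or> b = -1 \<or> b = 0" using b by auto
  { assume a1: "a = 1"
    hence "b = 1" "u = 1" "v = n" using b3 be u v by auto
    hence ?thesis using a1 y1 x1 q1 qn by simp }
  moreover
  { assume a1: "a = -1"
    hence "b = -1" "u = n" "v = 1" using b3 be u v by auto
    hence ?thesis using a1 y1 x1 q1 qn by simp }
  moreover
  { assume a0: "a = 0"
    { assume "b = 0" hence ?thesis using a0 be by simp }
    moreover
    { assume b1: "b = 1" hence "u = Suc v" "x1 = 0" using a0 be y1 x1 by auto
      hence ?thesis using b1 a0 qs[of v] v by simp }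
    moreover
    { assume b1: "b = -1" hence "v = Suc u" "x1 = 1" using a0 be y1 x1 by auto
      hence ?thesis using b1 a0 qs[of u] u by simp }
    ultimately have ?thesis using b3 by blast }
  ultimately show ?thesis using a3 by blast
qed

end


definition rv :: "('n::finite \<Rightarrow> int) \<Rightarrow> real^'n" where
  "rv \<alpha> = (\<chi> i. of_int (\<alpha> i))"

locale sp =
  fixes N :: "'n::finite \<Rightarrow> nat" and p :: "'n \<Rightarrow> nat \<Rightarrow> real"
    and D :: "('n \<Rightarrow> nat) set" and K :: "(real^'n) set"
  assumes N2: "\<And>i. N i \<ge> 2"
    and ppos: "\<And>i j. 1 \<le> j \<Longrightarrow> j \<le> N i \<Longrightarrow> p i j > 0"
    and psum: "\<And>i. (\<Sum>j=1..N i. p i j) = 1"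
    and Dsub: "D \<subseteq> {u. \<forall>i. 1 \<le> u i \<and> u i \<le> N i}"
    and Kcomp: "compact K" and Kne: "K \<noteq> {}"
    and Kfix: "K = (\<Union>u\<in>D. psi_digit p u ` K)"
begin

lemma dg: "dig p i (N i)"
  using N2 ppos psum by unfold_locales auto

lemma Dr: "u \<in> D \<Longrightarrow> 1 \<le> u i \<and> u i \<le> N i" using Dsub by auto

lemma Kimg: "u \<in> D \<Longrightarrow> k \<in> K \<Longrightarrow> psi_digit p u k \<in> K" using Kfix by blast

lemma Kdec: "x \<in> K \<Longrightarrow> \<exists>u\<in>D. \<exists>k\<in>K. x = psi_digit p u k" using Kfix by blast

lemma pr: "u \<in> D \<Longrightarrow> 0 < p i (u i) \<and> p i (u i) < 1"
  using ppos[of "u i" i] dig.p1[OF dg, of "u i" i] Dr[of u i] by auto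

lemma K_le1: "x \<in> K \<Longrightarrow> x $ i \<le> 1"
proof -
  obtain xm where xm: "xm \<in> K" "\<forall>y\<in>K. y $ i \<le> xm $ i"
    using continuous_attains_sup[OF Kcomp Kne, of "\<lambda>x. x $ i"]
      continuous_on_component[OF continuous_on_id, of K i] by auto
  obtain u k where uk: "u \<in> D" "k \<in> K" "xm = psi_digit p u k" using Kdec[OF xm(1)] by blast
  let ?M = "xm $ i"
  have "xm $ i = p i (u i) * k $ i + q_sp p i (u i)" using uk(3) by (simp add: psi_digit_def)
  moreover have "k $ i \<le> ?M" using xm uk by auto
  moreover have "q_sp p i (u i) + p i (u i) \<le> 1" using dig.pq1[OF dg] Dr[OF uk(1)] by blast
  moreover have "0 < p i (u i)" "p i (u i) < 1" using pr[OF uk(1)] by auto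
  ultimately have "?M \<le> 1"
  proof -
    assume a: "xm $ i = p i (u i) * k $ i + q_sp p i (u i)" "k $ i \<le> ?M"
      "q_sp p i (u i) + p i (u i) \<le> 1" "0 < p i (u i)" "p i (u i) < 1"
    have "p i (u i) * k $ i \<le> p i (u i) * ?M" using a by (intro mult_left_mono) auto
    hence "(1 - p i (u i)) * ?M \<le> (1 - p i (u i)) * 1" using a by (simp add: algebra_simps)
    thus ?thesis using a by (simp add: mult_le_cancel_left)
  qed
  thus "x \<in> K \<Longrightarrow> x $ i \<le> 1" using xm by force
qed

lemma K_ge0: "x \<in> K \<Longrightarrow> x $ i \<ge> 0"
proof -
  obtain xm where xm: "xm \<in> K" "\<forall>y\<in>K. xm $ i \<le> y $ i"
    using continuous_attains_inf[OF Kcomp Kne, of "\<lambda>x. x $ i"]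
      continuous_on_component[OF continuous_on_id, of K i] by auto
  obtain u k where uk: "u \<in> D" "k \<in> K" "xm = psi_digit p u k" using Kdec[OF xm(1)] by blast
  let ?M = "xm $ i"
  have a1: "xm $ i = p i (u i) * k $ i + q_sp p i (u i)" using uk(3) by (simp add: psi_digit_def)
  have a2: "?M \<le> k $ i" using xm uk by auto
  have a3: "q_sp p i (u i) \<ge> 0" using dig.q0[OF dg, of "u i" i] Dr[OF uk(1), of i] by simp
  have a4: "0 < p i (u i)" "p i (u i) < 1" using pr[OF uk(1)] by auto
  have "p i (u i) * ?M \<le> p i (u i) * k $ i" using a2 a4 by (intro mult_left_mono) auto
  hence "(1 - p i (u i)) * ?M \<ge> (1 - p i (u i)) * 0" using a1 a3 by (simp add: algebra_simps)
  hence "?M \<ge> 0" using a4 by (simp add: zero_le_mult_iff)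
  thus "x \<in> K \<Longrightarrow> x $ i \<ge> 0" using xm by force
qed

lemma norm2: "(norm (x::real^'n))^2 = (\<Sum>i\<in>UNIV. (x $ i)^2)"
  unfolding power2_norm_eq_inner inner_vec_def by (simp add: power2_eq_square)

lemma contr:
  assumes u: "u \<in> D" and ab: "a \<noteq> b"
  shows "dist (psi_digit p u a) (psi_digit p u b) < dist a b"
proof -
  have e: "psi_digit p u a - psi_digit p u b = (\<chi> i. p i (u i) * (a - b) $ i)"
    by (simp add: psi_digit_def vec_eq_iff algebra_simps)
  obtain j where j: "a $ j \<noteq> b $ j" using ab by (auto simp: vec_eq_iff)
  have "(\<Sum>i\<in>UNIV. (p i (u i) * (a - b) $ i)^2) < (\<Sum>i\<in>UNIV. ((a - b) $ i)^2)"
  proof (rule sum_strict_mono_ex1)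
    show "\<forall>i\<in>UNIV. (p i (u i) * (a - b) $ i)\<^sup>2 \<le> ((a - b) $ i)\<^sup>2"
    proof
      fix i
      have "(p i (u i))^2 \<le> 1" using pr[OF u, of i] by (intro power_le_one) auto
      hence "(p i (u i))^2 * ((a - b) $ i)^2 \<le> 1 * ((a - b) $ i)^2" by (intro mult_right_mono) auto
      thus "(p i (u i) * (a - b) $ i)\<^sup>2 \<le> ((a - b) $ i)\<^sup>2" by (simp add: power_mult_distrib)
    qed
    have "(p j (u j))^2 < 1" using pr[OF u, of j] by (simp add: power_less_one_iff abs_less_iff)
    moreover have "((a - b) $ j)^2 > 0" using j by simp
    ultimately have "(p j (u j))^2 * ((a - b) $ j)^2 < 1 * ((a - b) $ j)^2"
      by (intro mult_strict_right_mono) auto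
    thus "\<exists>i\<in>UNIV. (p i (u i) * (a - b) $ i)\<^sup>2 < ((a - b) $ i)\<^sup>2"
      by (auto simp: power_mult_distrib)
  qed simp
  hence "(dist (psi_digit p u a) (psi_digit p u b))^2 < (dist a b)^2"
    unfolding dist_norm norm2 e by simp
  thus ?thesis by (rule power_less_imp_less_base) simp
qed

lemma fix_in_K:
  assumes u: "u \<in> D" and f: "psi_digit p u f = f"
  shows "f \<in> K"
proof -
  obtain k where k: "k \<in> K" "\<forall>y\<in>K. dist f k \<le> dist f y"
    using continuous_attains_inf[OF Kcomp Kne, of "\<lambda>y. dist f y"]
      continuous_on_dist[OF continuous_on_const continuous_on_id, of K f] by auto
  show ?thesis
  proof (rule ccontr)
    assume "f \<notin> K"
    hence "f \<noteq> k" using k by auto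
    hence "dist (psi_digit p u f) (psi_digit p u k) < dist f k" by (rule contr[OF u])
    moreover have "dist f k \<le> dist f (psi_digit p u k)" using k Kimg[OF u k(1)] by auto
    ultimately show False using f by simp
  qed
qed

definition fp :: "('n \<Rightarrow> nat) \<Rightarrow> real^'n" where
  "fp u = (\<chi> i. q_sp p i (u i) / (1 - p i (u i)))"

lemma fp_fix: "u \<in> D \<Longrightarrow> psi_digit p u (fp u) = fp u"
proof -
  assume u: "u \<in> D"
  { fix i
    have "1 - p i (u i) \<noteq> 0" using pr[OF u, of i] by simp
    hence "p i (u i) * (q_sp p i (u i) / (1 - p i (u i))) + q_sp p i (u i) = q_sp p i (u i) / (1 - p i (u i))"
      by (simp add: field_simps) }
  thus ?thesis by (simp add: psi_digit_def fp_def vec_eq_iff)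
qed

lemma K_cube: "x \<in> K \<Longrightarrow> 0 \<le> x $ i \<and> x $ i \<le> 1" using K_le1 K_ge0 by auto


lemma E_zpm: "\<alpha> \<in> E_set N D t \<Longrightarrow> zpm_vec \<alpha> \<and> (\<exists>i. \<alpha> i \<noteq> 0)"
  by (cases t) auto

lemma zpm3: "zpm_vec \<alpha> \<Longrightarrow> \<alpha> i = 1 \<or> \<alpha> i = -1 \<or> \<alpha> i = 0"
  unfolding zpm_vec_def by (drule spec[of _ i]) auto

lemma E0_mono: "\<alpha> \<in> E_set N D 0 \<Longrightarrow> \<alpha> \<in> E_set N D m"
proof (cases m)
  case (Suc t)
  assume a: "\<alpha> \<in> E_set N D 0"
  then obtain u v where uv: "u \<in> D" "v \<in> D" "(\<lambda>i. (int (N i) - 1) * \<alpha> i) = (\<lambda>i. int (u i) - int (v i))"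
    by (auto simp: diff_set_def)
  have "(\<lambda>i. int (v i) - int (u i)) \<in> diff_set D" using uv by (auto simp: diff_set_def)
  moreover have "(\<lambda>i. int (N i) * \<alpha> i + (int (v i) - int (u i))) = \<alpha>"
  proof
    fix i have "(int (N i) - 1) * \<alpha> i = int (u i) - int (v i)" using uv(3) by metis
    thus "int (N i) * \<alpha> i + (int (v i) - int (u i)) = \<alpha> i" by (simp add: algebra_simps)
  qed
  moreover have "\<alpha> \<in> (\<Union>k\<le>t. E_set N D k)" using a by (intro UN_I[of 0]) auto
  ultimately have "\<exists>e\<in>diff_set D. (\<lambda>i. int (N i) * \<alpha> i + e i) \<in> (\<Union>k\<le>t. E_set N D k)" by metis
  moreover have "zpm_vec \<alpha> \<and> (\<exists>i. \<alpha> i \<noteq> 0)" using a by simp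
  ultimately show ?thesis using Suc by simp
qed simp

lemma E_mono: "s \<le> t \<Longrightarrow> \<alpha> \<in> E_set N D s \<Longrightarrow> \<alpha> \<in> E_set N D t"
proof (cases s)
  case 0 then show "s \<le> t \<Longrightarrow> \<alpha> \<in> E_set N D s \<Longrightarrow> \<alpha> \<in> E_set N D t" using E0_mono by simp
next
  case (Suc s')
  assume st: "s \<le> t" and a: "\<alpha> \<in> E_set N D s"
  then obtain t' where t: "t = Suc t'" "s' \<le> t'" using Suc by (cases t) auto
  from a Suc obtain e k where z: "zpm_vec \<alpha>" "\<exists>i. \<alpha> i \<noteq> 0" and e: "e \<in> diff_set D" and k: "k \<le> s'"
    and b: "(\<lambda>i. int (N i) * \<alpha> i + e i) \<in> E_set N D k" by auto
  have "(\<lambda>i. int (N i) * \<alpha> i + e i) \<in> (\<Union>k\<le>t'. E_set N D k)" using b k t by (intro UN_I[of k]) auto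
  thus ?thesis using z e t by auto
qed

lemma bwd: "\<alpha> \<in> E_set N D t \<Longrightarrow> \<exists>x\<in>K. x + rv \<alpha> \<in> K"
proof (induction t arbitrary: \<alpha>)
  case 0
  then obtain u v where uv: "u \<in> D" "v \<in> D" "(\<lambda>i. (int (N i) - 1) * \<alpha> i) = (\<lambda>i. int (u i) - int (v i))"
    and z: "zpm_vec \<alpha>"
    by (auto simp: diff_set_def)
  have "fp v + rv \<alpha> = fp u"
  unfolding vec_eq_iff proof
    fix i
    have e: "(int (N i) - 1) * \<alpha> i = int (u i) - int (v i)" using uv(3) by metis
    have ru: "1 \<le> u i" "u i \<le> N i" and rv': "1 \<le> v i" "v i \<le> N i" using Dr uv by auto
    have n2: "N i \<ge> 2" by (rule N2)
    have qN: "q_sp p i (N i) = 1 - p i (N i)"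
      using dig.qs[OF dg, of "N i" i] dig.qtop[OF dg, of i] n2 by simp
    have pN: "1 - p i (N i) \<noteq> 0" using dig.p1[OF dg, of "N i" i] n2 by simp
    consider "\<alpha> i = 1" | "\<alpha> i = -1" | "\<alpha> i = 0" using zpm3[OF z] by blast
    thus "(fp v + rv \<alpha>) $ i = fp u $ i"
    proof cases
      case 1
      hence "u i = N i" "v i = 1" using e ru rv' by auto
      thus ?thesis using 1 qN pN by (simp add: fp_def rv_def q_one')
    next
      case 2
      hence "u i = 1" "v i = N i" using e ru rv' by auto
      thus ?thesis using 2 qN pN by (simp add: fp_def rv_def q_one')
    next
      case 3
      hence "u i = v i" using e by simp
      thus ?thesis using 3 by (simp add: fp_def rv_def)
    qed
  qed
  thus ?case using fix_in_K[OF uv(1) fp_fix[OF uv(1)]] fix_in_K[OF uv(2) fp_fix[OF uv(2)]] by metis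
next
  case (Suc t)
  then obtain e k where z: "zpm_vec \<alpha>" and e: "e \<in> diff_set D" and k: "k \<le> t"
    and b: "(\<lambda>i. int (N i) * \<alpha> i + e i) \<in> E_set N D k" by auto
  define \<beta> where "\<beta> = (\<lambda>i. int (N i) * \<alpha> i + e i)"
  obtain u v where uv: "u \<in> D" "v \<in> D" "e = (\<lambda>i. int (u i) - int (v i))" using e by (auto simp: diff_set_def)
  have "\<exists>x\<in>K. x + rv \<beta> \<in> K"
  proof (cases "k = t")
    case True thus ?thesis using Suc.IH b \<beta>_def by simp
  next
    case False
    hence "k < t" using k by simp
    hence "\<beta> \<in> E_set N D t" using E_mono[of k t \<beta>] b \<beta>_def by simp
    thus ?thesis using Suc.IH by blast
  qed
  then obtain x1 where x1: "x1 \<in> K" "x1 + rv \<beta> \<in> K" by blast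
  have zb: "zpm_vec \<beta>" using E_zpm b \<beta>_def by blast
  have "psi_digit p u x1 + rv \<alpha> = psi_digit p v (x1 + rv \<beta>)"
  unfolding vec_eq_iff proof
    fix i
    have ru: "1 \<le> u i" "u i \<le> N i" and rv': "1 \<le> v i" "v i \<le> N i" using Dr uv by auto
    have c1: "0 \<le> x1 $ i" "x1 $ i \<le> 1" using K_cube[OF x1(1)] by auto
    have c2: "0 \<le> x1 $ i + of_int (\<beta> i)" "x1 $ i + of_int (\<beta> i) \<le> 1"
      using K_cube[OF x1(2), of i] by (auto simp: rv_def)
    have "q_sp p i (v i) + p i (v i) * (x1 $ i + of_int (\<beta> i)) = q_sp p i (u i) + p i (u i) * x1 $ i + of_int (\<alpha> i)"
      by (rule dig.coord_bwd[OF dg ru rv' c1 c2]) (use z zb in \<open>auto simp: zpm_vec_def \<beta>_def uv(3)\<close>)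
    thus "(psi_digit p u x1 + rv \<alpha>) $ i = psi_digit p v (x1 + rv \<beta>) $ i"
      by (simp add: psi_digit_def rv_def algebra_simps)
  qed
  thus ?case using Kimg[OF uv(1) x1(1)] Kimg[OF uv(2) x1(2)] by metis
qed


lemma norm_le: "zpm_vec (\<alpha>::'n\<Rightarrow>int) \<Longrightarrow> zpm_norm \<alpha> \<le> CARD('n)"
proof -
  assume z: "zpm_vec \<alpha>"
  have "zpm_norm \<alpha> \<le> (\<Sum>i\<in>(UNIV::'n set). 1)"
    unfolding zpm_norm_def
  proof (rule sum_mono)
    fix i :: 'n
    have "\<bar>\<alpha> i\<bar> \<le> 1" using z by (simp add: zpm_vec_def)
    thus "nat \<bar>\<alpha> i\<bar> \<le> 1" by (simp add: nat_le_iff)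
  qed
  thus ?thesis by simp
qed

lemma fwd: "\<forall>\<alpha>. CARD('n) - zpm_norm \<alpha> = m \<longrightarrow> zpm_vec \<alpha> \<longrightarrow> (\<exists>i. \<alpha> i \<noteq> 0)
   \<longrightarrow> (\<exists>x\<in>K. x + rv \<alpha> \<in> K) \<longrightarrow> \<alpha> \<in> E_set N D m"
proof (induction m rule: less_induct)
  case (less m)
  show ?case
  proof (intro allI impI)
    fix \<alpha> :: "'n \<Rightarrow> int"
    assume m: "CARD('n) - zpm_norm \<alpha> = m" and z: "zpm_vec \<alpha>" and nz: "\<exists>i. \<alpha> i \<noteq> 0"
      and ex: "\<exists>x\<in>K. x + rv \<alpha> \<in> K"
    then obtain x where x: "x \<in> K" "x + rv \<alpha> \<in> K" by blast
    obtain u x1 where u: "u \<in> D" "x1 \<in> K" "x = psi_digit p u x1" using Kdec[OF x(1)] by blast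
    obtain v y1 where v: "v \<in> D" "y1 \<in> K" "x + rv \<alpha> = psi_digit p v y1" using Kdec[OF x(2)] by blast
    define e where "e = (\<lambda>i. int (u i) - int (v i))"
    define \<beta> where "\<beta> = (\<lambda>i. int (N i) * \<alpha> i + e i)"
    have e_in: "e \<in> diff_set D" using u v by (auto simp: diff_set_def e_def)
    have co: "\<bar>\<beta> i\<bar> \<le> 1 \<and> y1 $ i = x1 $ i + of_int (\<beta> i) \<and> (\<alpha> i \<noteq> 0 \<longrightarrow> \<beta> i = \<alpha> i)" for i
    proof -
      have ru: "1 \<le> u i" "u i \<le> N i" and rv': "1 \<le> v i" "v i \<le> N i" using Dr u v by auto
      have c1: "0 \<le> x1 $ i" "x1 $ i \<le> 1" using K_cube[OF u(2)] by auto
      have c2: "0 \<le> y1 $ i" "y1 $ i \<le> 1" using K_cube[OF v(2)] by auto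
      have a: "\<bar>\<alpha> i\<bar> \<le> 1" using z by (simp add: zpm_vec_def)
      have "(x + rv \<alpha>) $ i = psi_digit p v y1 $ i" using v(3) by simp
      hence eq: "q_sp p i (u i) + p i (u i) * x1 $ i + of_int (\<alpha> i) = q_sp p i (v i) + p i (v i) * y1 $ i"
        using u(3) by (simp add: psi_digit_def rv_def algebra_simps)
      have "\<bar>int (N i) * \<alpha> i + int (u i) - int (v i)\<bar> \<le> 1 \<and> y1 $ i = x1 $ i + of_int (int (N i) * \<alpha> i + int (u i) - int (v i))
        \<and> (\<alpha> i \<noteq> 0 \<longrightarrow> int (N i) * \<alpha> i + int (u i) - int (v i) = \<alpha> i)"
        by (rule dig.coord_fwd[OF dg ru rv' c1 c2 a eq])
      thus ?thesis by (simp add: \<beta>_def e_def algebra_simps)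
    qed
    have zb: "zpm_vec \<beta>" using co by (simp add: zpm_vec_def)
    have y1: "y1 = x1 + rv \<beta>" using co by (simp add: vec_eq_iff rv_def)
    show "\<alpha> \<in> E_set N D m"
    proof (cases "\<beta> = \<alpha>")
      case True
      have "(\<lambda>i. (int (N i) - 1) * \<alpha> i) = (\<lambda>i. int (v i) - int (u i))"
      proof
        fix i have "\<beta> i = \<alpha> i" using True by simp
        thus "(int (N i) - 1) * \<alpha> i = int (v i) - int (u i)" by (simp add: \<beta>_def e_def algebra_simps)
      qed
      moreover have "(\<lambda>i. int (v i) - int (u i)) \<in> diff_set D" using u v by (auto simp: diff_set_def)
      ultimately have "\<alpha> \<in> E_set N D 0" using z nz by simp
      thus ?thesis by (rule E0_mono)
    next
      case False
      then obtain j where j: "\<beta> j \<noteq> \<alpha> j" by blast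
      have lt: "zpm_norm \<alpha> < zpm_norm \<beta>"
        unfolding zpm_norm_def
      proof (rule sum_strict_mono_ex1)
        show "\<forall>i\<in>UNIV. nat \<bar>\<alpha> i\<bar> \<le> nat \<bar>\<beta> i\<bar>"
        proof
          fix i :: 'n show "nat \<bar>\<alpha> i\<bar> \<le> nat \<bar>\<beta> i\<bar>" using co[of i] by (cases "\<alpha> i = 0") auto
        qed
        have "\<alpha> j = 0" "\<beta> j \<noteq> 0" using co[of j] j by auto
        thus "\<exists>i\<in>UNIV. nat \<bar>\<alpha> i\<bar> < nat \<bar>\<beta> i\<bar>" by auto
      qed simp
      have nb: "zpm_norm \<beta> \<le> CARD('n)" by (rule norm_le[OF zb])
      define m' where "m' = CARD('n) - zpm_norm \<beta>"
      have m'm: "m' < m" using m lt nb m'_def by simp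
      have nzb: "\<exists>i. \<beta> i \<noteq> 0" using nz co by metis
      have "\<beta> \<in> E_set N D m'" using less.IH[OF m'm] m'_def zb nzb y1 u(2) v(2) by blast
      then obtain t where t: "m = Suc t" "m' \<le> t" using m'm by (cases m) auto
      have "\<beta> \<in> (\<Union>k\<le>t. E_set N D k)" using \<open>\<beta> \<in> E_set N D m'\<close> t by (intro UN_I[of m']) auto
      thus ?thesis using t z nz e_in \<beta>_def by auto
    qed
  qed
qed


lemma lemA: "zpm_vec \<alpha> \<Longrightarrow> (\<exists>i. \<alpha> i \<noteq> 0) \<Longrightarrow>
  (\<exists>x\<in>K. x + rv \<alpha> \<in> K) \<longleftrightarrow> \<alpha> \<in> E_set N D (CARD('n) - zpm_norm \<alpha>)"
  using fwd bwd by blast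

lemma lin1:
  fixes P P' x y :: real
  assumes "P > 0" "P' > 0" "0 \<le> x" "x \<le> 1" "0 \<le> y" "y \<le> 1"
  shows "(P * x + P' = P' * y) \<longleftrightarrow> (y = x + 1)"
proof
  assume h: "P * x + P' = P' * y"
  have "P * x \<ge> 0" "P' * y \<le> P'" using assms by (auto simp: mult_le_cancel_left1)
  hence "P * x = 0" "P' * y = P'" using h by linarith+
  thus "y = x + 1" using assms by simp
next
  assume "y = x + 1"
  hence "x = 0" "y = 1" using assms by auto
  thus "P * x + P' = P' * y" by simp
qed

lemma word_eq:
  assumes wD: "set w \<subseteq> D" and w'D: "set w' \<subseteq> D" and len: "length w = length w'"
    and z: "zpm_vec (\<lambda>i. pi_word N w i - pi_word N w' i)"
    and x: "x \<in> K" and y: "y \<in> K"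
  shows "psi_word p w x = psi_word p w' y \<longleftrightarrow> y = x + rv (\<lambda>i. pi_word N w i - pi_word N w' i)"
  unfolding vec_eq_iff
proof (intro iff_allI)
  fix i
  let ?a = "pi_word N w i - pi_word N w' i"
  have dr: "\<forall>u\<in>set w \<union> set w'. 1 \<le> u i \<and> u i \<le> N i" using wD w'D Dr by blast
  have dr': "\<forall>u\<in>set w' \<union> set w. 1 \<le> u i \<and> u i \<le> N i" using dr by blast
  have C1: "(pi_word N w i = pi_word N w' i \<longrightarrow> Pw p w i = Pw p w' i \<and> Qw p w i = Qw p w' i) \<and>
    (pi_word N w i = pi_word N w' i + 1 \<longrightarrow> Qw p w i = Qw p w' i + Pw p w' i)"
    by (rule cell[of N i p w w', OF N2 ppos psum len dr])
  have C2: "(pi_word N w' i = pi_word N w i + 1 \<longrightarrow> Qw p w' i = Qw p w i + Pw p w i)"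
    using cell[of N i p w' w, OF N2 ppos psum len[symmetric] dr'] by blast
  have P: "Pw p w i > 0" "Pw p w' i > 0" using wD w'D pr by (auto intro!: Pw_pos)
  have cx: "0 \<le> x $ i" "x $ i \<le> 1" and cy: "0 \<le> y $ i" "y $ i \<le> 1" using K_cube x y by auto
  have lhs: "psi_word p w x $ i = psi_word p w' y $ i \<longleftrightarrow>
      Pw p w i * x $ i + Qw p w i = Pw p w' i * y $ i + Qw p w' i" by (simp add: psi_word_coord)
  have rhs: "y $ i = (x + rv (\<lambda>i. pi_word N w i - pi_word N w' i)) $ i \<longleftrightarrow> y $ i = x $ i + of_int ?a"
    by (simp add: rv_def)
  consider "?a = 1" | "?a = -1" | "?a = 0" using zpm3[OF z, of i] by auto
  hence "Pw p w i * x $ i + Qw p w i = Pw p w' i * y $ i + Qw p w' i \<longleftrightarrow> y $ i = x $ i + of_int ?a"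
  proof cases
    case 1
    hence "Qw p w i = Qw p w' i + Pw p w' i" using C1 by simp
    hence "Pw p w i * x $ i + Qw p w i = Pw p w' i * y $ i + Qw p w' i \<longleftrightarrow> Pw p w i * x $ i + Pw p w' i = Pw p w' i * y $ i"
      by linarith
    also have "\<dots> \<longleftrightarrow> y $ i = x $ i + 1" by (rule lin1[OF P cx cy])
    finally show ?thesis using 1 by simp
  next
    case 2
    hence "Qw p w' i = Qw p w i + Pw p w i" using C2 by simp
    hence "Pw p w i * x $ i + Qw p w i = Pw p w' i * y $ i + Qw p w' i \<longleftrightarrow> Pw p w' i * y $ i + Pw p w i = Pw p w i * x $ i"
      by linarith
    also have "\<dots> \<longleftrightarrow> x $ i = y $ i + 1" by (rule lin1[OF P(2) P(1) cy cx])
    finally show ?thesis using 2 by auto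
  next
    case 3
    hence "Pw p w i = Pw p w' i" "Qw p w i = Qw p w' i" using C1 by simp_all
    thus ?thesis using 3 P by auto
  qed
  thus "psi_word p w x $ i = psi_word p w' y $ i \<longleftrightarrow> y $ i = (x + rv (\<lambda>i. pi_word N w i - pi_word N w' i)) $ i"
    using lhs rhs by simp
qed

end


theorem mainTheorem20:
  fixes N :: "'n::finite \<Rightarrow> nat"
    and p :: "'n \<Rightarrow> nat \<Rightarrow> real"
    and D :: "('n \<Rightarrow> nat) set"
    and K :: "(real^'n) set"
    and w w' :: "('n \<Rightarrow> nat) list"
  assumes d2: "CARD('n) \<ge> 2"
    and N2: "\<And>i. N i \<ge> 2"
    and ppos: "\<And>i j. 1 \<le> j \<Longrightarrow> j \<le> N i \<Longrightarrow> p i j > 0"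
    and psum: "\<And>i. (\<Sum>j=1..N i. p i j) = 1"
    and Dsub: "D \<subseteq> {u. \<forall>i. 1 \<le> u i \<and> u i \<le> N i}"
    and Dcard: "1 < card D" "card D < (\<Prod>i\<in>UNIV. N i)"
    and Kcomp: "compact K" and Kne: "K \<noteq> {}"
    and Kfix: "K = (\<Union>u\<in>D. psi_digit p u ` K)"
    and wD: "w \<noteq> []" "set w \<subseteq> D"
    and w'D: "w' \<noteq> []" "set w' \<subseteq> D"
    and len: "length w = length w'"
    and zpm: "zpm_vec (\<lambda>i. pi_word N w i - pi_word N w' i)"
    and nz: "\<exists>i. pi_word N w i \<noteq> pi_word N w' i"
  shows "psi_word p w ` K \<inter> psi_word p w' ` K \<noteq> {} \<longleftrightarrow>
    (\<lambda>i. pi_word N w i - pi_word N w' i)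
      \<in> E_set N D (CARD('n) - zpm_norm (\<lambda>i. pi_word N w i - pi_word N w' i))"
proof -
  interpret sp N p D K using N2 ppos psum Dsub Kcomp Kne Kfix by unfold_locales auto
  let ?a = "\<lambda>i. pi_word N w i - pi_word N w' i"
  have "psi_word p w ` K \<inter> psi_word p w' ` K \<noteq> {} \<longleftrightarrow> (\<exists>x\<in>K. x + rv ?a \<in> K)"
  proof
    assume "psi_word p w ` K \<inter> psi_word p w' ` K \<noteq> {}"
    then obtain x y where xy: "x \<in> K" "y \<in> K" "psi_word p w x = psi_word p w' y" by blast
    hence "y = x + rv ?a" using word_eq[OF wD(2) w'D(2) len zpm xy(1,2)] by simp
    thus "\<exists>x\<in>K. x + rv ?a \<in> K" using xy by blast
  next
    assume "\<exists>x\<in>K. x + rv ?a \<in> K"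
    then obtain x where x: "x \<in> K" "x + rv ?a \<in> K" by blast
    hence "psi_word p w x = psi_word p w' (x + rv ?a)" using word_eq[OF wD(2) w'D(2) len zpm x] by simp
    thus "psi_word p w ` K \<inter> psi_word p w' ` K \<noteq> {}" using x by blast
  qed
  also have "\<dots> \<longleftrightarrow> ?a \<in> E_set N D (CARD('n) - zpm_norm ?a)"
    by (rule lemA[OF zpm]) (use nz in auto)
  finally show ?thesis .
qed

end
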